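(* Take $T=N$, fix $z\in\mathbb C\setminus\mathbb R$, $k$ and $\epsilon\in(0,\tau)$. Suppose that along some subsequence of $N$ the complex measures $\mathbb E[L^{1,z}_N]$ converge weakly to $K_z(x)\,dx$ for some bounded measurable $K_z:[0,1]\to\mathbb C$. Then, along this subsequence, $$\sum_{t=1}^N M^k_\epsilon(I^t_N)\,\mathbb E[G_N(z)_{tt}]\longrightarrow\int_0^1K_z(x)\,M^k_\epsilon(dx)\quad\text{in probability.}$$
   Context: Lognormal MRM: fix $\tau>0$, $\gamma^2\in[0,2)$; let $\mu$ be a Gaussian independently scattered random measure on $S=\mathbb R\times(0,\infty)$ with control measure $\theta(dt,dy)=y^{-2}dtdy$ (independent values on disjoint sets, $\mu(A)\sim\mathcal N(-\frac{\gamma^2}2\theta(A),\gamma^2\theta(A))$), $A_\epsilon(t)=\{(s,y):y\ge\epsilon,|s-t|\le\min(y,\tau)/2\}$, $\omega_\epsilon(t)=\mu(A_\epsilon(t))$, $M_\epsilon(dt)=e^{\omega_\epsilon(t)}dt$, $M$ the a.s. weak limit of $M_\epsilon$. $(M^k,M^k_\epsilon)$ are i.i.d. copies of $(M,M_\epsilon)$. Finite-$N$ setting ($T=N$): $(B^i)$ i.i.d. standard Brownian motions independent of the $M^i$; $X_N(k,t)=B^k(M^k[0,t/N])-B^k(M^k[0,(t-1)/N])$; $G_N(z)=\begin{pmatrix}zI_N&-X_N^t\\-X_N&zI_N\end{pmatrix}^{-1}$; $L^{1,z}_N$ is the complex measure $L^{1,z}_N(f)=\frac1N\sum_{t=1}^Nf(t/N)G_N(z)_{tt}$;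 $I^t_N=[(t-1)/N,t/N]$. *)

theory Defs
  imports "HOL-Probability.Probability"
begin

definition S_set :: "(real \<times> real) set" where
  "S_set = {p. snd p > 0}"

definition theta :: "(real \<times> real) measure" where
  "theta = density lborel (\<lambda>p. indicator S_set p * ennreal (1 / (snd p)^2))"

definition adm :: "(real \<times> real) set set" where
  "adm = {A. A \<in> sets lborel \<and> A \<subseteq> S_set \<and> emeasure theta A < \<infinity>}"

definition gauss_law :: "real \<Rightarrow> real \<Rightarrow> real measure" where
  "gauss_law m v = (if v = 0 then return borel m
      else density lborel (\<lambda>x. ennreal (normal_density m (sqrt v) x)))"

definition gaussian_scattered ::
  "'a measure \<Rightarrow> real \<Rightarrow> ((real \<times> real) set \<Rightarrow> 'a \<Rightarrow> real) \<Rightarrow> bool" where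
  "gaussian_scattered P g2 mu \<longleftrightarrow>
     (\<forall>A\<in>adm. mu A \<in> borel_measurable P \<and>
        distr P borel (mu A) = gauss_law (- (g2 / 2) * measure theta A) (g2 * measure theta A)) \<and>
     (\<forall>F. finite F \<longrightarrow> F \<subseteq> adm \<longrightarrow> disjoint F \<longrightarrow>
        prob_space.indep_vars P (\<lambda>_. borel) mu F) \<and>
     (\<forall>A\<in>adm. \<forall>B\<in>adm. A \<inter> B = {} \<longrightarrow> (AE \<omega> in P. mu (A \<union> B) \<omega> = mu A \<omega> + mu B \<omega>))"

definition A_eps :: "real \<Rightarrow> real \<Rightarrow> real \<Rightarrow> (real \<times> real) set" where
  "A_eps tau eps t = {(s, y). y \<ge> eps \<and> \<bar>s - t\<bar> \<le> min y tau / 2}"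

definition std_BM :: "'a measure \<Rightarrow> (real \<Rightarrow> 'a \<Rightarrow> real) \<Rightarrow> bool" where
  "std_BM P X \<longleftrightarrow>
     (\<forall>\<omega>\<in>space P. X 0 \<omega> = 0 \<and> continuous_on {0..} (\<lambda>t. X t \<omega>)) \<and>
     (\<forall>t\<ge>0. X t \<in> borel_measurable P) \<and>
     (\<forall>s t. 0 \<le> s \<longrightarrow> s < t \<longrightarrow> distr P borel (\<lambda>\<omega>. X t \<omega> - X s \<omega>) = gauss_law 0 (t - s)) \<and>
     (\<forall>(ts :: nat \<Rightarrow> real) n. (\<forall>i<n. 0 \<le> ts i \<and> ts i < ts (Suc i)) \<longrightarrow>
        prob_space.indep_vars P (\<lambda>_. borel) (\<lambda>i \<omega>. X (ts (Suc i)) \<omega> - X (ts i) \<omega>) {..<n})"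

definition gen_sigma :: "'a measure \<Rightarrow> ('i \<Rightarrow> 'a \<Rightarrow> real) \<Rightarrow> 'i set \<Rightarrow> 'a set set" where
  "gen_sigma P X I = sigma_sets (space P) (\<Union>i\<in>I. {X i -` C \<inter> space P | C. C \<in> sets borel})"

definition Meps :: "(real \<Rightarrow> 'a \<Rightarrow> real) \<Rightarrow> 'a \<Rightarrow> real measure" where
  "Meps w \<omega> = density lborel (\<lambda>t. ennreal (exp (w t \<omega>)))"

definition vague_conv :: "(real \<Rightarrow> real measure) \<Rightarrow> real measure \<Rightarrow> bool" where
  "vague_conv Mf M \<longleftrightarrow>
     (\<forall>f :: real \<Rightarrow> real. continuous_on UNIV f \<longrightarrow> (\<exists>a b. \<forall>x. x \<notin> {a..b} \<longrightarrow> f x = 0) \<longrightarrow>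
        ((\<lambda>e. integral\<^sup>L (Mf e) f) \<longlongrightarrow> integral\<^sup>L M f) (at_right 0))"

text \<open>X_N(k,t) for 1 <= k,t <= N (T = N).\<close>
definition Xentry :: "(nat \<Rightarrow> real \<Rightarrow> 'a \<Rightarrow> real) \<Rightarrow> (nat \<Rightarrow> 'a \<Rightarrow> real measure) \<Rightarrow> nat \<Rightarrow> nat \<Rightarrow> nat \<Rightarrow> 'a \<Rightarrow> real" where
  "Xentry B M N k t \<omega> = B k (measure (M k \<omega>) {0 .. real t / real N}) \<omega>
                      - B k (measure (M k \<omega>) {0 .. (real t - 1) / real N}) \<omega>"

text \<open>The 2N x 2N matrix [[zI, -X^t], [-X, zI]], 0-based indices; X given with 1-based indices.\<close>
definition Hmat :: "nat \<Rightarrow> (nat \<Rightarrow> nat \<Rightarrow> real) \<Rightarrow> complex \<Rightarrow> nat \<Rightarrow> nat \<Rightarrow> complex" where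
  "Hmat N X z i j =
     (if i < N \<and> j < N then (if i = j then z else 0)
      else if i < N then - complex_of_real (X (j - N + 1) (i + 1))
      else if j < N then - complex_of_real (X (i - N + 1) (j + 1))
      else (if i = j then z else 0))"

definition mat_inv :: "nat \<Rightarrow> (nat \<Rightarrow> nat \<Rightarrow> complex) \<Rightarrow> nat \<Rightarrow> nat \<Rightarrow> complex" where
  "mat_inv n A = (THE G. (\<forall>i<n. \<forall>j<n. (\<Sum>l<n. A i l * G l j) = (if i = j then 1 else 0)) \<and>
                         (\<forall>i<n. \<forall>j<n. (\<Sum>l<n. G i l * A l j) = (if i = j then 1 else 0)) \<and>
                         (\<forall>i j. \<not> (i < n \<and> j < n) \<longrightarrow> G i j = 0))"

definition Gdiag :: "(nat \<Rightarrow> real \<Rightarrow> 'a \<Rightarrow> real) \<Rightarrow> (nat \<Rightarrow> 'a \<Rightarrow> real measure) \<Rightarrow> nat \<Rightarrow> complex \<Rightarrow> nat \<Rightarrow> 'a \<Rightarrow> complex" where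
  "Gdiag B M N z t \<omega> = mat_inv (2 * N) (Hmat N (\<lambda>k s. Xentry B M N k s \<omega>) z) (t - 1) (t - 1)"

definition conv_in_prob :: "'a measure \<Rightarrow> (nat \<Rightarrow> 'a \<Rightarrow> complex) \<Rightarrow> ('a \<Rightarrow> complex) \<Rightarrow> bool" where
  "conv_in_prob P Y Z \<longleftrightarrow>
     (\<forall>e > 0. ((\<lambda>n. measure P {\<omega> \<in> space P. dist (Y n \<omega>) (Z \<omega>) > e}) \<longlongrightarrow> 0) sequentially)"

end

theory Submission
  imports Defs "Jordan_Normal_Form.Determinant"
begin


lemma inv_exists:
  fixes A :: "nat \<Rightarrow> nat \<Rightarrow> complex"
  assumes inj: "\<And>v. (\<forall>i<n. (\<Sum>l<n. A i l * v l) = 0) \<Longrightarrow> (\<forall>i<n. v i = 0)"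
  shows "\<exists>G. (\<forall>i<n. \<forall>j<n. (\<Sum>l<n. A i l * G l j) = (if i = j then 1 else 0)) \<and>
             (\<forall>i<n. \<forall>j<n. (\<Sum>l<n. G i l * A l j) = (if i = j then 1 else 0)) \<and>
             (\<forall>i j. \<not> (i < n \<and> j < n) \<longrightarrow> G i j = 0)"
proof -
  define Am where "Am = mat n n (\<lambda>(i,j). A i j)"
  have Am: "Am \<in> carrier_mat n n" unfolding Am_def by simp
  have "det Am \<noteq> 0"
  proof
    assume "det Am = 0"
    then obtain v where v: "v \<in> carrier_vec n" "v \<noteq> 0\<^sub>v n" "Am *\<^sub>v v = 0\<^sub>v n"
      using det_0_iff_vec_prod_zero[OF Am] by auto
    have "\<forall>i<n. (\<Sum>l<n. A i l * v $ l) = 0"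
    proof (intro allI impI)
      fix i assume i: "i < n"
      have "(Am *\<^sub>v v) $ i = 0" using v(3) i by simp
      moreover have "(Am *\<^sub>v v) $ i = (\<Sum>l<n. A i l * v $ l)"
        using i v(1) unfolding Am_def by (simp add: scalar_prod_def lessThan_atLeast0)
      ultimately show "(\<Sum>l<n. A i l * v $ l) = 0" by simp
    qed
    from inj[OF this] have "v = 0\<^sub>v n" using v(1) by (intro eq_vecI) auto
    with v(2) show False by simp
  qed
  from det_non_zero_imp_unit[OF Am this, of "()"]
  obtain Bm where Bm: "Bm \<in> carrier_mat n n" "Bm * Am = 1\<^sub>m n" "Am * Bm = 1\<^sub>m n"
    unfolding Units_def ring_mat_def using Am by auto
  define G where "G i j = (if i < n \<and> j < n then Bm $$ (i,j) else 0)" for i j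
  have 1: "(\<Sum>l<n. A i l * G l j) = (if i = j then 1 else 0)" if "i<n" "j<n" for i j
  proof -
    have "(Am * Bm) $$ (i,j) = (\<Sum>l<n. A i l * G l j)"
      using that Bm(1) unfolding Am_def G_def by (simp add: scalar_prod_def lessThan_atLeast0)
    then show ?thesis using Bm(3) that by simp
  qed
  have 2: "(\<Sum>l<n. G i l * A l j) = (if i = j then 1 else 0)" if "i<n" "j<n" for i j
  proof -
    have "(Bm * Am) $$ (i,j) = (\<Sum>l<n. G i l * A l j)"
      using that Bm(1) unfolding Am_def G_def by (simp add: scalar_prod_def lessThan_atLeast0)
    then show ?thesis using Bm(2) that by simp
  qed
  show ?thesis using 1 2 by (intro exI[of _ G]) (auto simp: G_def)
qed



lemma row_sum_expand:
  fixes R :: "nat \<Rightarrow> nat \<Rightarrow> real"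
  assumes "i < n" and A: "\<And>i j. i < n \<Longrightarrow> j < n \<Longrightarrow> A i j = (if i = j then z else 0) - of_real (R i j)"
  shows "(\<Sum>l<n. A i l * v l) = z * v i - (\<Sum>l<n. of_real (R i l) * v l)"
proof -
  have "(\<Sum>l<n. A i l * v l) = (\<Sum>l<n. (if i = l then z * v l else 0) - of_real (R i l) * v l)"
    using assms(1) by (intro sum.cong) (auto simp: A algebra_simps)
  also have "\<dots> = z * v i - (\<Sum>l<n. of_real (R i l) * v l)"
    using assms(1) by (simp add: sum_subtractf)
  finally show ?thesis .
qed

lemma form_im:
  fixes R :: "nat \<Rightarrow> nat \<Rightarrow> real" and v :: "nat \<Rightarrow> complex"
  assumes sym: "\<And>i j. i < n \<Longrightarrow> j < n \<Longrightarrow> R i j = R j i"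
    and A: "\<And>i j. i < n \<Longrightarrow> j < n \<Longrightarrow> A i j = (if i = j then z else 0) - of_real (R i j)"
  shows "Im (\<Sum>i<n. cnj (v i) * (\<Sum>l<n. A i l * v l)) = Im z * (\<Sum>i<n. (cmod (v i))^2)"
proof -
  define S where "S = (\<Sum>i<n. \<Sum>l<n. of_real (R i l) * (cnj (v i) * v l))"
  have "(\<Sum>i<n. cnj (v i) * (\<Sum>l<n. A i l * v l)) = (\<Sum>i<n. z * (cnj (v i) * v i) - (\<Sum>l<n. of_real (R i l) * (cnj (v i) * v l)))"
  proof (rule sum.cong[OF refl])
    fix i assume "i \<in> {..<n}"
    then have "(\<Sum>l<n. A i l * v l) = z * v i - (\<Sum>l<n. of_real (R i l) * v l)"
      by (intro row_sum_expand[OF _ A]) auto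
    then have "cnj (v i) * (\<Sum>l<n. A i l * v l) = cnj (v i) * (z * v i) - cnj (v i) * (\<Sum>l<n. of_real (R i l) * v l)"
      by (simp add: right_diff_distrib)
    also have "\<dots> = z * (cnj (v i) * v i) - (\<Sum>l<n. of_real (R i l) * (cnj (v i) * v l))"
      unfolding sum_distrib_left by (intro arg_cong2[where f="(-)"] sum.cong refl) (auto simp: mult.left_commute)
    finally show "cnj (v i) * (\<Sum>l<n. A i l * v l) = z * (cnj (v i) * v i) - (\<Sum>l<n. of_real (R i l) * (cnj (v i) * v l))" .
  qed
  also have "\<dots> = z * (\<Sum>i<n. cnj (v i) * v i) - S"
    by (simp add: S_def sum_subtractf sum_distrib_left)
  finally have Q: "(\<Sum>i<n. cnj (v i) * (\<Sum>l<n. A i l * v l)) = z * (\<Sum>i<n. cnj (v i) * v i) - S" .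
  have "cnj S = (\<Sum>i<n. \<Sum>l<n. of_real (R i l) * (cnj (v l) * v i))"
    by (simp add: S_def mult.commute)
  also have "\<dots> = (\<Sum>l<n. \<Sum>i<n. of_real (R i l) * (cnj (v l) * v i))"
    by (rule sum.swap)
  also have "\<dots> = S" unfolding S_def
    by (intro sum.cong refl) (simp add: sym)
  finally have "Im (cnj S) = Im S" by simp
  then have "Im S = 0" by simp
  moreover have "(\<Sum>i<n. cnj (v i) * v i) = of_real (\<Sum>i<n. (cmod (v i))^2)"
    unfolding of_real_sum of_real_power by (intro sum.cong refl) (simp only: of_real_power[symmetric] complex_norm_square mult.commute)
  ultimately show ?thesis using Q by simp
qed



lemma herm_inj:
  fixes R :: "nat \<Rightarrow> nat \<Rightarrow> real" and v :: "nat \<Rightarrow> complex"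
  assumes sym: "\<And>i j. i < n \<Longrightarrow> j < n \<Longrightarrow> R i j = R j i"
    and A: "\<And>i j. i < n \<Longrightarrow> j < n \<Longrightarrow> A i j = (if i = j then z else 0) - of_real (R i j)"
    and z: "Im z \<noteq> 0" and v: "\<forall>i<n. (\<Sum>l<n. A i l * v l) = 0"
  shows "\<forall>i<n. v i = 0"
proof -
  have "(\<Sum>i<n. cnj (v i) * (\<Sum>l<n. A i l * v l)) = 0" using v by simp
  moreover have "Im (\<Sum>i<n. cnj (v i) * (\<Sum>l<n. A i l * v l)) = Im z * (\<Sum>i<n. (cmod (v i))^2)"
    by (rule form_im[where n=n and R=R and A=A and z=z and v=v, OF sym A])
  ultimately have "Im z * (\<Sum>i<n. (cmod (v i))^2) = 0" by simp
  with z have "(\<Sum>i<n. (cmod (v i))^2) = 0" by simp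
  then have "\<forall>i\<in>{..<n}. (cmod (v i))^2 = 0" by (subst (asm) sum_nonneg_eq_0_iff) auto
  then show ?thesis by simp
qed

lemma herm_bound:
  fixes R :: "nat \<Rightarrow> nat \<Rightarrow> real" and v :: "nat \<Rightarrow> complex"
  assumes sym: "\<And>i j. i < n \<Longrightarrow> j < n \<Longrightarrow> R i j = R j i"
    and A: "\<And>i j. i < n \<Longrightarrow> j < n \<Longrightarrow> A i j = (if i = j then z else 0) - of_real (R i j)"
    and z: "Im z \<noteq> 0" and p: "p < n" and v: "\<forall>i<n. (\<Sum>l<n. A i l * v l) = (if i = p then 1 else 0)"
  shows "cmod (v p) \<le> 1 / \<bar>Im z\<bar>"
proof -
  have "(\<Sum>i<n. cnj (v i) * (\<Sum>l<n. A i l * v l)) = (\<Sum>i<n. if i = p then cnj (v i) else 0)"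
    using v by (intro sum.cong) auto
  also have "\<dots> = cnj (v p)" using p by simp
  finally have E: "(\<Sum>i<n. cnj (v i) * (\<Sum>l<n. A i l * v l)) = cnj (v p)" .
  have "Im (\<Sum>i<n. cnj (v i) * (\<Sum>l<n. A i l * v l)) = - Im (v p)" unfolding E by simp
  moreover have "Im (\<Sum>i<n. cnj (v i) * (\<Sum>l<n. A i l * v l)) = Im z * (\<Sum>i<n. (cmod (v i))^2)"
    by (rule form_im[where n=n and R=R and A=A and z=z and v=v, OF sym A])
  ultimately have "Im z * (\<Sum>i<n. (cmod (v i))^2) = - Im (v p)" by (simp only:)
  then have "\<bar>Im z * (\<Sum>i<n. (cmod (v i))^2)\<bar> = \<bar>Im (v p)\<bar>" by (simp only: abs_minus_cancel)
  moreover have "\<bar>(\<Sum>i<n. (cmod (v i))^2)\<bar> = (\<Sum>i<n. (cmod (v i))^2)" by (intro abs_of_nonneg sum_nonneg) simp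
  ultimately have "\<bar>Im z\<bar> * (\<Sum>i<n. (cmod (v i))^2) = \<bar>Im (v p)\<bar>" by (simp only: abs_mult)
  also have "\<dots> \<le> cmod (v p)" by (rule abs_Im_le_cmod)
  finally have 1: "\<bar>Im z\<bar> * (\<Sum>i<n. (cmod (v i))^2) \<le> cmod (v p)" .
  have "(cmod (v p))^2 \<le> (\<Sum>i<n. (cmod (v i))^2)"
    using p by (intro member_le_sum) auto
  then have "\<bar>Im z\<bar> * (cmod (v p))^2 \<le> \<bar>Im z\<bar> * (\<Sum>i<n. (cmod (v i))^2)"
    by (rule mult_left_mono) simp
  then have "\<bar>Im z\<bar> * (cmod (v p))^2 \<le> cmod (v p)" using 1 by linarith
  then have 2: "\<bar>Im z\<bar> * cmod (v p) * cmod (v p) \<le> 1 * cmod (v p)" by (simp add: power2_eq_square mult.assoc)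
  show ?thesis
  proof (cases "cmod (v p) = 0")
    case True then show ?thesis by simp
  next
    case False
    have "\<bar>Im z\<bar> * cmod (v p) \<le> 1" by (rule mult_right_le_imp_le[OF 2]) (use False in simp)
    moreover have "0 < \<bar>Im z\<bar>" using z by simp
    ultimately show ?thesis by (simp add: pos_le_divide_eq mult.commute)
  qed
qed

lemma mat_inv_props:
  fixes A :: "nat \<Rightarrow> nat \<Rightarrow> complex"
  assumes ex: "\<exists>G. (\<forall>i<n. \<forall>j<n. (\<Sum>l<n. A i l * G l j) = (if i = j then 1 else 0)) \<and>
             (\<forall>i<n. \<forall>j<n. (\<Sum>l<n. G i l * A l j) = (if i = j then 1 else 0)) \<and>
             (\<forall>i j. \<not> (i < n \<and> j < n) \<longrightarrow> G i j = 0)"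
  shows "\<forall>i<n. \<forall>j<n. (\<Sum>l<n. A i l * mat_inv n A l j) = (if i = j then 1 else 0)"
proof -
  let ?P = "\<lambda>G. (\<forall>i<n. \<forall>j<n. (\<Sum>l<n. A i l * G l j) = (if i = j then 1 else 0)) \<and>
             (\<forall>i<n. \<forall>j<n. (\<Sum>l<n. G i l * A l j) = (if i = j then 1 else 0)) \<and>
             (\<forall>i j. \<not> (i < n \<and> j < n) \<longrightarrow> G i j = 0)"
  have uniq: "G = G'" if "?P G" "?P G'" for G G'
  proof (intro ext)
    fix i j
    show "G i j = G' i j"
    proof (cases "i < n \<and> j < n")
      case False then show ?thesis using that by auto
    next
      case True
      have "G i j = (\<Sum>l<n. if l = j then G i l else 0)" using True by simp
      also have "\<dots> = (\<Sum>l<n. G i l * (if l = j then 1 else 0))" by (intro sum.cong) auto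
      also have "\<dots> = (\<Sum>l<n. G i l * (\<Sum>m<n. A l m * G' m j))"
        using that(2) True by (intro sum.cong) auto
      also have "\<dots> = (\<Sum>l<n. \<Sum>m<n. G i l * A l m * G' m j)"
        by (simp add: sum_distrib_left mult.assoc)
      also have "\<dots> = (\<Sum>m<n. \<Sum>l<n. G i l * A l m * G' m j)" by (rule sum.swap)
      also have "\<dots> = (\<Sum>m<n. (\<Sum>l<n. G i l * A l m) * G' m j)"
        by (simp add: sum_distrib_right)
      also have "\<dots> = (\<Sum>m<n. (if i = m then 1 else 0) * G' m j)"
        using that(1) True by (intro sum.cong) auto
      also have "\<dots> = (\<Sum>m<n. if m = i then G' m j else 0)" by (intro sum.cong) auto
      also have "\<dots> = G' i j" using True by simp
      finally show ?thesis .
    qed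
  qed
  from ex obtain G where "?P G" by blast
  have PT: "?P (THE G. ?P G)"
  proof (rule theI[of ?P G])
    show "?P G" by fact
    fix x assume "?P x"
    then show "x = G" using uniq[OF _ \<open>?P G\<close>] by blast
  qed
  have "mat_inv n A = (THE G. ?P G)" unfolding mat_inv_def by (rule refl)
  with PT have "?P (mat_inv n A)" by simp
  then show ?thesis by blast
qed

lemma Gdiag_bound:
  assumes z: "Im z \<noteq> 0" and t: "1 \<le> t" "t \<le> N"
  shows "cmod (Gdiag B M N z t \<omega>) \<le> 1 / \<bar>Im z\<bar>"
proof -
  define X where "X = (\<lambda>k s. Xentry B M N k s \<omega>)"
  define R :: "nat \<Rightarrow> nat \<Rightarrow> real" where "R i j = (if i < N \<and> j < N then 0
      else if i < N then X (j - N + 1) (i + 1) else if j < N then X (i - N + 1) (j + 1) else 0)" for i j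
  have sym: "R i j = R j i" for i j unfolding R_def by auto
  have A: "Hmat N X z i j = (if i = j then z else 0) - of_real (R i j)" for i j
    by (cases "i < N"; cases "j < N") (auto simp: Hmat_def R_def)
  have ex: "\<exists>G. (\<forall>i<2*N. \<forall>j<2*N. (\<Sum>l<2*N. Hmat N X z i l * G l j) = (if i = j then 1 else 0)) \<and>
             (\<forall>i<2*N. \<forall>j<2*N. (\<Sum>l<2*N. G i l * Hmat N X z l j) = (if i = j then 1 else 0)) \<and>
             (\<forall>i j. \<not> (i < 2*N \<and> j < 2*N) \<longrightarrow> G i j = 0)"
    by (rule inv_exists) (rule herm_inj[OF sym A z], auto)
  have p: "t - 1 < 2 * N" using t by auto
  have "cmod (mat_inv (2*N) (Hmat N X z) (t - 1) (t - 1)) \<le> 1 / \<bar>Im z\<bar>"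
    by (rule herm_bound[OF sym A z p]) (use mat_inv_props[OF ex] p in auto)
  then show ?thesis unfolding Gdiag_def X_def .
qed



lemma prob_integral_bound:
  fixes f :: "'a \<Rightarrow> complex"
  assumes P: "prob_space P" and b: "\<And>x. cmod (f x) \<le> C"
  shows "cmod (integral\<^sup>L P f) \<le> C"
proof -
  interpret prob_space P by (rule P)
  have C0: "0 \<le> C" using b[of undefined] norm_ge_zero[of "f undefined"] by linarith
  have "cmod (integral\<^sup>L P f) \<le> (LINT x|P. cmod (f x))" by (rule integral_norm_bound)
  also have "\<dots> \<le> C"
  proof (cases "integrable P (\<lambda>x. cmod (f x))")
    case True
    have "(LINT x|P. cmod (f x)) \<le> (LINT x|P. C)"
      using True b P by (intro integral_mono) auto
    also have "\<dots> = C" by (simp add: prob_space)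
    finally show ?thesis .
  next
    case False then show ?thesis using C0 by (simp add: not_integrable_integral_eq)
  qed
  finally show ?thesis .
qed

lemma set_integrable_cont:
  fixes w :: "real \<Rightarrow> real"
  assumes "continuous_on UNIV w"
  shows "set_integrable lborel {a..b} w"
  unfolding set_integrable_def
  by (rule borel_integrable_compact) (auto intro: continuous_on_subset[OF assms])

lemma meas_density_Icc:
  fixes w :: "real \<Rightarrow> real"
  assumes cont: "continuous_on UNIV w" and pos: "\<And>x. 0 \<le> w x"
  shows "measure (density lborel (\<lambda>t. ennreal (w t))) {a..b} = (LINT x:{a..b}|lborel. w x)"
proof -
  have wm: "w \<in> borel_measurable lborel" using borel_measurable_continuous_onI[OF cont] by simp
  have int: "integrable lborel (\<lambda>x. indicator {a..b} x *\<^sub>R w x)"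
    using set_integrable_cont[OF cont] unfolding set_integrable_def .
  have "emeasure (density lborel (\<lambda>t. ennreal (w t))) {a..b} = (\<integral>\<^sup>+x. ennreal (w x) * indicator {a..b} x \<partial>lborel)"
    using wm by (intro emeasure_density) auto
  also have "\<dots> = (\<integral>\<^sup>+x. ennreal (indicator {a..b} x *\<^sub>R w x) \<partial>lborel)"
    by (intro nn_integral_cong) (auto split: split_indicator)
  also have "\<dots> = ennreal (LINT x:{a..b}|lborel. w x)"
    unfolding set_lebesgue_integral_def
    using int pos by (intro nn_integral_eq_integral) (auto split: split_indicator)
  finally have "emeasure (density lborel (\<lambda>t. ennreal (w t))) {a..b} = ennreal (LINT x:{a..b}|lborel. w x)" .
  moreover have "0 \<le> (LINT x:{a..b}|lborel. w x)"
    unfolding set_lebesgue_integral_def using pos by (intro Bochner_Integration.integral_nonneg) (simp add: indicator_def)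
  ultimately show ?thesis by (simp add: measure_def)
qed

lemma interval_err:
  fixes w :: "real \<Rightarrow> real"
  assumes cont: "continuous_on UNIV w" and ab: "a \<le> b" and e: "\<And>x. x \<in> {a..b} \<Longrightarrow> \<bar>w x - w b\<bar> \<le> e"
  shows "\<bar>(LINT x:{a..b}|lborel. w x) - (b - a) * w b\<bar> \<le> e * (b - a)"
proof -
  have cont2: "continuous_on UNIV (\<lambda>x. w x - w b)" by (intro continuous_intros cont)
  have cont3: "continuous_on UNIV (\<lambda>x. \<bar>w x - w b\<bar>)" by (intro continuous_intros cont)
  have ic: "set_integrable lborel {a..b} (\<lambda>x. c)" for c :: real
    by (rule set_integrable_cont) (intro continuous_intros)
  have "(LINT x:{a..b}|lborel. w x - w b) = (LINT x:{a..b}|lborel. w x) - (LINT x:{a..b}|lborel. w b)"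
    by (rule set_integral_diff(2)[OF set_integrable_cont[OF cont] ic])
  also have "(LINT x:{a..b}|lborel. w b) = (b - a) * w b"
    using ab by (subst set_integral_const) auto
  finally have eq: "(LINT x:{a..b}|lborel. w x) - (b - a) * w b = (LINT x:{a..b}|lborel. w x - w b)" by simp
  have "\<bar>LINT x:{a..b}|lborel. w x - w b\<bar> \<le> (LINT x:{a..b}|lborel. \<bar>w x - w b\<bar>)"
    using set_integral_norm_bound[OF set_integrable_cont[OF cont2]] by simp
  also have "\<dots> \<le> (LINT x:{a..b}|lborel. e)"
    by (rule set_integral_mono[OF set_integrable_cont[OF cont3] ic]) (rule e)
  also have "\<dots> = e * (b - a)"
    using ab by (subst set_integral_const) auto
  finally show ?thesis unfolding eq .
qed

lemma riemann_conv:
  fixes w :: "real \<Rightarrow> real" and c :: "nat \<Rightarrow> nat \<Rightarrow> complex" and N :: "nat \<Rightarrow> nat" and L :: complex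
  assumes cont: "continuous_on UNIV w" and C0: "0 \<le> C" and C: "\<And>n t. 1 \<le> t \<Longrightarrow> t \<le> N n \<Longrightarrow> cmod (c n t) \<le> C"
    and NT: "filterlim N at_top sequentially"
    and hyp: "(\<lambda>n. (1 / real (N n)) *\<^sub>R (\<Sum>t = 1..N n. w (real t / real (N n)) *\<^sub>R c n t)) \<longlonglongrightarrow> L"
  shows "(\<lambda>n. \<Sum>t = 1..N n. (LINT x:{(real t - 1) / real (N n) .. real t / real (N n)}|lborel. w x) *\<^sub>R c n t) \<longlonglongrightarrow> L"
proof -
  define I where "I n t = (LINT x:{(real t - 1) / real (N n) .. real t / real (N n)}|lborel. w x)" for n t
  define D where "D n = (\<Sum>t = 1..N n. I n t *\<^sub>R c n t) - (1 / real (N n)) *\<^sub>R (\<Sum>t = 1..N n. w (real t / real (N n)) *\<^sub>R c n t)" for n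
  have "D \<longlonglongrightarrow> 0"
  proof (rule tendstoI)
    fix e :: real assume e: "0 < e"
    define e' where "e' = e / (2 * (C + 1))"
    have e': "0 < e'" unfolding e'_def using e C0 by simp
    have uc: "uniformly_continuous_on {0..1} w"
      by (rule compact_uniformly_continuous) (auto intro: continuous_on_subset[OF cont])
    obtain d where d: "d > 0" "\<And>x x'. x \<in> {0..1} \<Longrightarrow> x' \<in> {0..1} \<Longrightarrow> dist x' x < d \<Longrightarrow> dist (w x') (w x) < e'"
      using uniformly_continuous_onE[OF uc e'] by blast
    have "eventually (\<lambda>n. N n \<ge> nat \<lceil>1/d\<rceil> + 1) sequentially"
      using NT by (simp add: filterlim_at_top)
    then have ev: "eventually (\<lambda>n. 1/d < real (N n)) sequentially"
    proof (rule eventually_mono)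
      fix n assume "nat \<lceil>1/d\<rceil> + 1 \<le> N n"
      then have "real (nat \<lceil>1/d\<rceil>) + 1 \<le> real (N n)" by linarith
      moreover have "1/d \<le> real (nat \<lceil>1/d\<rceil>)" by linarith
      ultimately show "1/d < real (N n)" by linarith
    qed
    from ev show "eventually (\<lambda>n. dist (D n) 0 < e) sequentially"
    proof eventually_elim
      fix n assume Nn: "1/d < real (N n)"
      define m where "m = real (N n)"
      have m: "0 < m" using Nn d(1) unfolding m_def by (smt (verit) divide_pos_pos)
      have "1 < m * d" using Nn d(1) unfolding m_def by (simp add: divide_less_eq mult.commute)
      then have md: "1/m < d" using m by (simp add: divide_less_eq mult.commute)
      have step: "cmod ((I n t - w (real t / m) / m) *\<^sub>R c n t) \<le> e' / m * C" if t: "t \<in> {1..N n}" for t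
      proof -
        define a where "a = (real t - 1) / m"
        define b where "b = real t / m"
        have ab: "a \<le> b" "b - a = 1/m" "0 \<le> a" "b \<le> 1"
          using t m unfolding a_def b_def m_def by (auto simp: divide_simps)
        have "\<bar>w x - w b\<bar> \<le> e'" if x: "x \<in> {a..b}" for x
        proof -
          have "dist x b < d" using x ab md by (simp add: dist_real_def)
          then have "dist (w x) (w b) < e'" using x ab by (intro d(2)) auto
          then show ?thesis by (simp add: dist_real_def)
        qed
        from interval_err[OF cont ab(1) this]
        have "\<bar>I n t - (b - a) * w b\<bar> \<le> e' * (b - a)"
          unfolding I_def a_def b_def m_def by simp
        then have 1: "\<bar>I n t - w (real t / m) / m\<bar> \<le> e' / m"
          using ab(2) unfolding b_def by simp
        have "cmod ((I n t - w (real t / m) / m) *\<^sub>R c n t) = \<bar>I n t - w (real t / m) / m\<bar> * cmod (c n t)"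
          by simp
        also have "\<dots> \<le> e' / m * C"
          using 1 C[of t n] t e' m by (intro mult_mono) auto
        finally show ?thesis .
      qed
      have Deq: "D n = (\<Sum>t = 1..N n. (I n t - w (real t / m) / m) *\<^sub>R c n t)"
        unfolding D_def m_def
        by (simp add: scaleR_sum_right sum_subtractf[symmetric] scaleR_diff_left)
      have "norm (D n) \<le> (\<Sum>t = 1..N n. e' / m * C)"
        unfolding Deq by (rule sum_norm_le) (rule step)
      also have "\<dots> = e' * C" using m unfolding m_def by simp
      also have "\<dots> < e"
      proof -
        have "e' * C = e * (C / (2 * (C + 1)))" unfolding e'_def by simp
        also have "\<dots> < e * 1" using e C0 by (intro mult_strict_left_mono) (auto simp: divide_less_eq)
        finally show ?thesis by simp
      qed
      finally show "dist (D n) 0 < e" by simp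
    qed
  qed
  then have "(\<lambda>n. D n + (1 / real (N n)) *\<^sub>R (\<Sum>t = 1..N n. w (real t / real (N n)) *\<^sub>R c n t)) \<longlonglongrightarrow> 0 + L"
    by (intro tendsto_add hyp)
  then show ?thesis by (simp add: D_def I_def)
qed



lemma conv_in_prob_pointwise:
  assumes P: "prob_space P" and lim: "\<And>\<omega>. \<omega> \<in> space P \<Longrightarrow> (\<lambda>n. Y n \<omega>) \<longlonglongrightarrow> Z \<omega>"
  shows "conv_in_prob P Y Z"
  unfolding conv_in_prob_def
proof (intro allI impI)
  interpret prob_space P by (rule P)
  fix e :: real assume e: "0 < e"
  define A where "A n = {\<omega> \<in> space P. dist (Y n \<omega>) (Z \<omega>) > e}" for n
  define f where "f n = (if A n \<in> sets P then indicator (A n) else (\<lambda>_. 0 :: real))" for n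
  have eq: "measure P (A n) = integral\<^sup>L P (f n)" for n
  proof (cases "A n \<in> sets P")
    case True
    then have "A n \<inter> space P = A n" using sets.sets_into_space by blast
    with True show ?thesis by (simp add: f_def)
  next
    case False then show ?thesis by (simp add: f_def measure_notin_sets)
  qed
  have "(\<lambda>n. integral\<^sup>L P (f n)) \<longlonglongrightarrow> integral\<^sup>L P (\<lambda>_. 0 :: real)"
  proof (rule integral_dominated_convergence[where w = "\<lambda>_. 1"])
    show "(\<lambda>_. 0 :: real) \<in> borel_measurable P" by simp
    show "f n \<in> borel_measurable P" for n by (simp add: f_def)
    show "integrable P (\<lambda>_. 1 :: real)" by simp
    show "AE x in P. (\<lambda>n. f n x) \<longlonglongrightarrow> 0"
    proof (rule AE_I2)
      fix x assume x: "x \<in> space P"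
      have "eventually (\<lambda>n. dist (Y n x) (Z x) < e) sequentially"
        using tendstoD[OF lim[OF x] e] .
      then have "eventually (\<lambda>n. f n x = 0) sequentially"
        by eventually_elim (auto simp: f_def A_def indicator_def)
      then show "(\<lambda>n. f n x) \<longlonglongrightarrow> 0" by (rule tendsto_eventually)
    qed
    show "AE x in P. norm (f n x) \<le> 1" for n
      by (rule AE_I2) (auto simp: f_def indicator_def)
  qed
  then show "(\<lambda>n. measure P {\<omega> \<in> space P. dist (Y n \<omega>) (Z \<omega>) > e}) \<longlonglongrightarrow> 0"
    unfolding A_def[symmetric] eq by simp
qed

theorem mainTheorem14:
  fixes P :: "'a measure" and tau gamma2 eps :: real and z :: complex and k :: nat
    and mu :: "nat \<Rightarrow> (real \<times> real) set \<Rightarrow> 'a \<Rightarrow> real"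
    and om :: "nat \<Rightarrow> real \<Rightarrow> real \<Rightarrow> 'a \<Rightarrow> real"
    and M :: "nat \<Rightarrow> 'a \<Rightarrow> real measure"
    and B :: "nat \<Rightarrow> real \<Rightarrow> 'a \<Rightarrow> real"
    and s :: "nat \<Rightarrow> nat" and K :: "real \<Rightarrow> complex"
  assumes "prob_space P" and "tau > 0" and "0 \<le> gamma2" and "gamma2 < 2"
    and "\<forall>j. gaussian_scattered P gamma2 (mu j)"
    and "\<forall>j e t. e > 0 \<longrightarrow> om j e t \<in> borel_measurable P \<and>
                 (AE \<omega> in P. om j e t \<omega> = mu j (A_eps tau e t) \<omega>)"
    and "\<forall>j e \<omega>. e > 0 \<longrightarrow> \<omega> \<in> space P \<longrightarrow> continuous_on UNIV (\<lambda>t. om j e t \<omega>)"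
    and "\<forall>j. AE \<omega> in P. sets (M j \<omega>) = sets borel \<and> (\<forall>a b. emeasure (M j \<omega>) {a..b} < \<infinity>)
                 \<and> vague_conv (\<lambda>e. Meps (om j e) \<omega>) (M j \<omega>)"
    and "\<forall>j u. (\<lambda>\<omega>. measure (M j \<omega>) {0..u}) \<in> borel_measurable P"
    and "\<forall>j. std_BM P (B j)"
    and "prob_space.indep_sets P
           (\<lambda>i. case i of Inl j \<Rightarrow> gen_sigma P (mu j) adm | Inr j \<Rightarrow> gen_sigma P (B j) {0..}) UNIV"
    and "Im z \<noteq> 0" and "0 < eps" and "eps < tau"
    and "strict_mono s"
    and "set_borel_measurable borel {0..1} K" and "bounded (K ` {0..1})"
    and "\<forall>f :: real \<Rightarrow> real. continuous_on {0..1} f \<longrightarrow>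
           (\<lambda>n. (1 / real (s n)) *\<^sub>R
                 (\<Sum>t = 1..s n. f (real t / real (s n)) *\<^sub>R integral\<^sup>L P (Gdiag B M (s n) z t)))
           \<longlonglongrightarrow> (LINT x:{0..1}|lborel. f x *\<^sub>R K x)"
  shows "conv_in_prob P
           (\<lambda>n \<omega>. \<Sum>t = 1..s n.
               measure (Meps (om k eps) \<omega>) {(real t - 1) / real (s n) .. real t / real (s n)}
                 *\<^sub>R integral\<^sup>L P (Gdiag B M (s n) z t))
           (\<lambda>\<omega>. LINT x:{0..1}|Meps (om k eps) \<omega>. K x)"
proof -
  note P = assms(1)
  have zI: "Im z \<noteq> 0" by fact
  define c where "c n t = integral\<^sup>L P (Gdiag B M (s n) z t)" for n t
  have cb: "cmod (c n t) \<le> 1 / \<bar>Im z\<bar>" if "1 \<le> t" "t \<le> s n" for n t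
    unfolding c_def by (rule prob_integral_bound[OF P]) (rule Gdiag_bound[OF zI that])
  have NT: "filterlim s at_top sequentially" using assms(15) by (rule filterlim_subseq)
  show ?thesis
  proof (rule conv_in_prob_pointwise[OF P])
    fix \<omega> assume \<omega>: "\<omega> \<in> space P"
    define w where "w t = exp (om k eps t \<omega>)" for t
    have contom: "continuous_on UNIV (\<lambda>t. om k eps t \<omega>)" using assms(7) assms(13) \<omega> by blast
    have cont: "continuous_on UNIV w" unfolding w_def by (intro continuous_intros contom)
    have wpos: "0 \<le> w x" for x unfolding w_def by simp
    have Meq: "Meps (om k eps) \<omega> = density lborel (\<lambda>t. ennreal (w t))" unfolding Meps_def w_def ..
    have hyp: "(\<lambda>n. (1 / real (s n)) *\<^sub>R (\<Sum>t = 1..s n. w (real t / real (s n)) *\<^sub>R c n t))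
           \<longlonglongrightarrow> (LINT x:{0..1}|lborel. w x *\<^sub>R K x)"
      using assms(18) continuous_on_subset[OF cont] unfolding c_def by blast
    have Kmeas: "(\<lambda>x. indicator {0..1} x *\<^sub>R K x) \<in> borel_measurable lborel"
      using assms(16) unfolding set_borel_measurable_def by simp
    have wmeas: "w \<in> borel_measurable lborel" using borel_measurable_continuous_onI[OF cont] by simp
    have Zeq: "(LINT x:{0..1}|Meps (om k eps) \<omega>. K x) = (LINT x:{0..1}|lborel. w x *\<^sub>R K x)"
      unfolding Meq set_lebesgue_integral_def
      by (subst integral_density[OF Kmeas wmeas]) (auto simp: wpos intro!: Bochner_Integration.integral_cong)
    have Yeq: "(\<Sum>t = 1..s n. measure (Meps (om k eps) \<omega>) {(real t - 1) / real (s n) .. real t / real (s n)}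
                 *\<^sub>R integral\<^sup>L P (Gdiag B M (s n) z t))
          = (\<Sum>t = 1..s n. (LINT x:{(real t - 1) / real (s n) .. real t / real (s n)}|lborel. w x) *\<^sub>R c n t)" for n
      unfolding Meq meas_density_Icc[OF cont wpos] c_def ..
    show "(\<lambda>n. \<Sum>t = 1..s n. measure (Meps (om k eps) \<omega>) {(real t - 1) / real (s n) .. real t / real (s n)}
                 *\<^sub>R integral\<^sup>L P (Gdiag B M (s n) z t)) \<longlonglongrightarrow> (LINT x:{0..1}|Meps (om k eps) \<omega>. K x)"
      unfolding Yeq Zeq
      by (rule riemann_conv[OF cont _ cb NT hyp]) simp_all
  qed
qed


end
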